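(* For every integer $k\ge 4$, there exists a graph $H$ of order $k$ and at least two distinct positive integers $n$ such that, for each such $n$, there exists a graph of order $n$ and size $\mathrm{ex}(n,H)+1$ which contains exactly one copy of $H$.
   Context: All graphs are finite and simple. The order of a graph is its number of vertices and its size is its number of edges. A copy of $H$ in $G$ is a subgraph of $G$ isomorphic to $H$; the number of copies of $H$ in $G$ is the number of distinct subgraphs of $G$ isomorphic to $H$. For a graph $H$ and a positive integer $n$, the Turán number $\mathrm{ex}(n,H)$ is the maximum size of a simple graph of order $n$ containing no copy of $H$. *)

theory Defs
  imports Main
begin

definition simple_graph :: "'a set \<Rightarrow> 'a set set \<Rightarrow> bool" where
  "simple_graph V E \<longleftrightarrow> finite V \<and>
     E \<subseteq> {e. \<exists>x y. x \<in> V \<and> y \<in> V \<and> x \<noteq> y \<and> e = {x, y}}"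

definition graph_iso :: "'a set \<times> 'a set set \<Rightarrow> 'b set \<times> 'b set set \<Rightarrow> bool" where
  "graph_iso G H \<longleftrightarrow> (\<exists>f. bij_betw f (fst G) (fst H) \<and>
     (\<forall>x\<in>fst G. \<forall>y\<in>fst G. {x, y} \<in> snd G \<longleftrightarrow> {f x, f y} \<in> snd H))"

definition copies :: "'a set \<times> 'a set set \<Rightarrow> 'b set \<times> 'b set set \<Rightarrow> ('a set \<times> 'a set set) set" where
  "copies G H = {(V', E'). V' \<subseteq> fst G \<and> E' \<subseteq> snd G \<and> simple_graph V' E' \<and> graph_iso (V', E') H}"

definition contains :: "'a set \<times> 'a set set \<Rightarrow> 'b set \<times> 'b set set \<Rightarrow> bool" where
  "contains G H \<longleftrightarrow> copies G H \<noteq> {}"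

text \<open>Turan number: maximum size of an H-free simple graph of order n
  (graphs of order n are taken on the vertex set {..<n}, without loss of generality).\<close>

definition ex :: "nat \<Rightarrow> 'b set \<times> 'b set set \<Rightarrow> nat" where
  "ex n H = Max {card E | E. simple_graph {..<n} E \<and> \<not> contains ({..<n}, E) H}"

end

theory Submission
  imports Defs
begin

definition pairs :: "'a set \<Rightarrow> 'a set set" where
  "pairs V = {e. \<exists>x y. x \<in> V \<and> y \<in> V \<and> x \<noteq> y \<and> e = {x, y}}"

definition HE :: "nat \<Rightarrow> nat \<Rightarrow> nat set set" where
  "HE t k = {e. \<exists>x y. x < k \<and> y < k \<and> x \<noteq> y \<and> (x < t \<or> y < t) \<and> e = {x, y}}"

definition ES :: "'a set \<Rightarrow> 'a set \<Rightarrow> 'a set set" where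
  "ES V T = {e. \<exists>x y. x \<in> V \<and> y \<in> V \<and> x \<noteq> y \<and> (x \<in> T \<or> y \<in> T) \<and> e = {x, y}}"

definition valid :: "'a set \<Rightarrow> 'a set set \<Rightarrow> nat \<Rightarrow> nat \<Rightarrow> 'a set \<Rightarrow> 'a set \<Rightarrow> bool" where
  "valid V E t k T S \<longleftrightarrow> T \<subseteq> V \<and> S \<subseteq> V \<and> T \<inter> S = {} \<and> card T = t \<and> card S = k - t \<and>
     (\<forall>x\<in>T. \<forall>y\<in>T \<union> S. x \<noteq> y \<longrightarrow> {x, y} \<in> E)"

lemma simple_graph_pairs: "simple_graph V E \<longleftrightarrow> finite V \<and> E \<subseteq> pairs V"
  unfolding simple_graph_def pairs_def by auto

lemma in_pairs: "{a, b} \<in> pairs V \<longleftrightarrow> a \<noteq> b \<and> a \<in> V \<and> b \<in> V"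
  unfolding pairs_def by (auto simp: doubleton_eq_iff)

lemma in_HE: "{a, b} \<in> HE t k \<longleftrightarrow> a \<noteq> b \<and> a < k \<and> b < k \<and> (a < t \<or> b < t)"
  unfolding HE_def by (auto simp: doubleton_eq_iff)

lemma in_ES: "{a, b} \<in> ES V T \<longleftrightarrow> a \<noteq> b \<and> a \<in> V \<and> b \<in> V \<and> (a \<in> T \<or> b \<in> T)"
  unfolding ES_def by (auto simp: doubleton_eq_iff)

lemma ES_pairs: "ES V T \<subseteq> pairs V"
  unfolding ES_def pairs_def by auto

lemma HE_simple: "simple_graph {..<k} (HE t k)"
  unfolding simple_graph_def HE_def by auto

lemma copies_eq:
  assumes fin: "finite V" and tk: "t \<le> k"
  shows "copies (V, E) ({..<k}, HE t k) =
    (\<lambda>(T, S). (T \<union> S, ES (T \<union> S) T)) ` {(T, S). valid V E t k T S}"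
proof
  show "copies (V, E) ({..<k}, HE t k) \<subseteq> (\<lambda>(T, S). (T \<union> S, ES (T \<union> S) T)) ` {(T, S). valid V E t k T S}"
  proof
    fix c assume "c \<in> copies (V, E) ({..<k}, HE t k)"
    then obtain V' E' where c: "c = (V', E')" and V'V: "V' \<subseteq> V" and E'E: "E' \<subseteq> E"
      and sg: "simple_graph V' E'" and iso: "graph_iso (V', E') ({..<k}, HE t k)"
      unfolding copies_def by auto
    from iso obtain f where bij: "bij_betw f V' {..<k}"
      and adj: "\<forall>x\<in>V'. \<forall>y\<in>V'. {x, y} \<in> E' \<longleftrightarrow> {f x, f y} \<in> HE t k"
      unfolding graph_iso_def by auto
    define T where "T = {x\<in>V'. f x < t}"
    define S where "S = {x\<in>V'. \<not> f x < t}"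
    have inj: "inj_on f V'" using bij bij_betw_imp_inj_on by blast
    have img: "f ` V' = {..<k}" using bij bij_betw_imp_surj_on by blast
    have "f ` T = {..<t}"
    proof
      show "f ` T \<subseteq> {..<t}" unfolding T_def by auto
      show "{..<t} \<subseteq> f ` T"
      proof
        fix y assume "y \<in> {..<t}"
        then have "y \<in> f ` V'" using img tk by auto
        then obtain x where "x \<in> V'" "y = f x" by auto
        then show "y \<in> f ` T" using \<open>y \<in> {..<t}\<close> unfolding T_def by auto
      qed
    qed
    then have "bij_betw f T {..<t}" using bij_betw_subset[OF bij] unfolding T_def by auto
    then have cT: "card T = t" using bij_betw_same_card by fastforce
    have "f ` S = {t..<k}"
    proof
      show "f ` S \<subseteq> {t..<k}" unfolding S_def using img by auto
      show "{t..<k} \<subseteq> f ` S"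
      proof
        fix y assume "y \<in> {t..<k}"
        then have "y \<in> f ` V'" using img by auto
        then obtain x where "x \<in> V'" "y = f x" by auto
        then show "y \<in> f ` S" using \<open>y \<in> {t..<k}\<close> unfolding S_def by auto
      qed
    qed
    then have "bij_betw f S {t..<k}" using bij_betw_subset[OF bij] unfolding S_def by auto
    then have cS: "card S = k - t" using bij_betw_same_card by fastforce
    have VTS: "V' = T \<union> S" unfolding T_def S_def by auto
    have E'eq: "E' = ES V' T"
    proof
      show "E' \<subseteq> ES V' T"
      proof
        fix e assume "e \<in> E'"
        with sg obtain x y where xy: "x \<in> V'" "y \<in> V'" "x \<noteq> y" "e = {x, y}"
          unfolding simple_graph_def by blast
        then have "{f x, f y} \<in> HE t k" using adj \<open>e \<in> E'\<close> by auto
        then have "f x < t \<or> f y < t" by (simp add: in_HE)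
        then show "e \<in> ES V' T" using xy unfolding T_def by (auto simp: in_ES)
      qed
      show "ES V' T \<subseteq> E'"
      proof
        fix e assume "e \<in> ES V' T"
        then obtain x y where xy: "x \<in> V'" "y \<in> V'" "x \<noteq> y" "x \<in> T \<or> y \<in> T" "e = {x, y}"
          unfolding ES_def by blast
        have "f x \<noteq> f y" using inj xy by (meson inj_on_eq_iff)
        moreover have "f x < k" "f y < k" using img xy by auto
        moreover have "f x < t \<or> f y < t" using xy unfolding T_def by auto
        ultimately have "{f x, f y} \<in> HE t k" by (simp add: in_HE)
        then show "e \<in> E'" using adj xy by auto
      qed
    qed
    have "valid V E t k T S"
      unfolding valid_def
    proof (intro conjI ballI impI)
      show "T \<subseteq> V" "S \<subseteq> V" using V'V VTS by auto
      show "T \<inter> S = {}" unfolding T_def S_def by auto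
      show "card T = t" by (rule cT)
      show "card S = k - t" by (rule cS)
      fix x y assume "x \<in> T" "y \<in> T \<union> S" "x \<noteq> y"
      then have "{x, y} \<in> ES V' T" using VTS by (auto simp: in_ES)
      then show "{x, y} \<in> E" using E'eq E'E by auto
    qed
    then show "c \<in> (\<lambda>(T, S). (T \<union> S, ES (T \<union> S) T)) ` {(T, S). valid V E t k T S}"
      using c VTS E'eq by (auto intro!: image_eqI[where x="(T, S)"])
  qed
next
  show "(\<lambda>(T, S). (T \<union> S, ES (T \<union> S) T)) ` {(T, S). valid V E t k T S} \<subseteq> copies (V, E) ({..<k}, HE t k)"
  proof
    fix c assume "c \<in> (\<lambda>(T, S). (T \<union> S, ES (T \<union> S) T)) ` {(T, S). valid V E t k T S}"
    then obtain T S where c: "c = (T \<union> S, ES (T \<union> S) T)" and v: "valid V E t k T S" by auto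
    from v have TV: "T \<subseteq> V" and SV: "S \<subseteq> V" and TS: "T \<inter> S = {}" and cT: "card T = t"
      and cS: "card S = k - t" and ed: "\<forall>x\<in>T. \<forall>y\<in>T \<union> S. x \<noteq> y \<longrightarrow> {x, y} \<in> E"
      unfolding valid_def by auto
    have fT: "finite T" and fS: "finite S" using TV SV fin finite_subset by auto
    obtain g where g: "bij_betw g T {..<t}"
      using finite_same_card_bij[OF fT, of "{..<t}"] cT by auto
    obtain h where h: "bij_betw h S {t..<k}"
      using finite_same_card_bij[OF fS, of "{t..<k}"] cS by auto
    define f where "f x = (if x \<in> T then g x else h x)" for x
    have "bij_betw f T {..<t}" using g by (rule bij_betw_cong[THEN iffD1, rotated]) (simp add: f_def)
    moreover have "bij_betw f S {t..<k}" using h TS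
      by (intro bij_betw_cong[THEN iffD1, OF _ h]) (auto simp: f_def)
    ultimately have "bij_betw f (T \<union> S) ({..<t} \<union> {t..<k})"
      by (rule bij_betw_combine) auto
    moreover have "{..<t} \<union> {t..<k} = {..<k}" using tk by auto
    ultimately have bij: "bij_betw f (T \<union> S) {..<k}" by simp
    have fT': "x \<in> T \<Longrightarrow> f x < t" for x using g unfolding f_def bij_betw_def by auto
    have fS': "x \<in> S \<Longrightarrow> \<not> f x < t" for x
    proof -
      assume xS: "x \<in> S"
      then have "x \<notin> T" using TS by auto
      moreover have "h x \<in> {t..<k}" using h xS unfolding bij_betw_def by auto
      ultimately show ?thesis unfolding f_def by auto
    qed
    have fk: "x \<in> T \<union> S \<Longrightarrow> f x < k" for x using bij unfolding bij_betw_def by auto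
    have inj: "inj_on f (T \<union> S)" using bij bij_betw_imp_inj_on by blast
    have iso: "graph_iso (T \<union> S, ES (T \<union> S) T) ({..<k}, HE t k)"
      unfolding graph_iso_def
    proof (intro exI conjI ballI)
      show "bij_betw f (fst (T \<union> S, ES (T \<union> S) T)) (fst ({..<k}, HE t k))" using bij by simp
      fix x y assume x: "x \<in> fst (T \<union> S, ES (T \<union> S) T)" and y: "y \<in> fst (T \<union> S, ES (T \<union> S) T)"
      then have x': "x \<in> T \<union> S" and y': "y \<in> T \<union> S" by auto
      have "x \<noteq> y \<longleftrightarrow> f x \<noteq> f y" using inj x' y' by (meson inj_on_eq_iff)
      moreover have "x \<in> T \<longleftrightarrow> f x < t" "y \<in> T \<longleftrightarrow> f y < t" using fT' fS' x' y' by auto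
      ultimately show "({x, y} \<in> snd (T \<union> S, ES (T \<union> S) T)) = ({f x, f y} \<in> snd ({..<k}, HE t k))"
        using x' y' fk by (auto simp: in_ES in_HE)
    qed
    have sg: "simple_graph (T \<union> S) (ES (T \<union> S) T)"
      unfolding simple_graph_pairs using fT fS ES_pairs by auto
    have "ES (T \<union> S) T \<subseteq> E"
    proof
      fix e assume "e \<in> ES (T \<union> S) T"
      then obtain x y where xy: "x \<in> T \<union> S" "y \<in> T \<union> S" "x \<noteq> y" "x \<in> T \<or> y \<in> T" "e = {x, y}"
        unfolding ES_def by blast
      then show "e \<in> E" using ed by (auto simp: insert_commute)
    qed
    then show "c \<in> copies (V, E) ({..<k}, HE t k)"
      unfolding copies_def c using TV SV sg iso by auto
  qed
qed

lemma contains_iff: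
  assumes "finite V" "t \<le> k"
  shows "contains (V, E) ({..<k}, HE t k) \<longleftrightarrow> (\<exists>T S. valid V E t k T S)"
  unfolding contains_def copies_eq[OF assms] by auto

lemma card_copies_one:
  assumes "finite V" "t \<le> k" "{(T, S). valid V E t k T S} = {(T0, S0)}"
  shows "card (copies (V, E) ({..<k}, HE t k)) = 1"
  unfolding copies_eq[OF assms(1,2)] assms(3) by simp



definition nb :: "'a set \<Rightarrow> 'a set set \<Rightarrow> 'a \<Rightarrow> 'a set" where
  "nb V E v = {u\<in>V. {u, v} \<in> E}"

lemma nb_sub: "E \<subseteq> pairs V \<Longrightarrow> nb V E v \<subseteq> V - {v}"
proof
  fix u assume E: "E \<subseteq> pairs V" and u: "u \<in> nb V E v"
  then have "{u, v} \<in> pairs V" "u \<in> V" unfolding nb_def by auto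
  then show "u \<in> V - {v}" by (simp add: in_pairs)
qed

lemma finite_pairs: "finite V \<Longrightarrow> finite (pairs V)"
proof -
  assume "finite V"
  have "pairs V \<subseteq> Pow V" unfolding pairs_def by auto
  then show ?thesis using \<open>finite V\<close> finite_subset by blast
qed

lemma card_pairs: "finite V \<Longrightarrow> card (pairs V) = card V choose 2"
proof -
  assume f: "finite V"
  have "pairs V = {B. B \<subseteq> V \<and> card B = 2}"
  proof (rule set_eqI, rule iffI)
    fix e assume "e \<in> pairs V"
    then obtain x y where "x \<in> V" "y \<in> V" "x \<noteq> y" "e = {x, y}" unfolding pairs_def by blast
    then show "e \<in> {B. B \<subseteq> V \<and> card B = 2}" by simp
  next
    fix e assume "e \<in> {B. B \<subseteq> V \<and> card B = 2}"
    then have "e \<subseteq> V" "card e = 2" by auto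
    then obtain x y where "e = {x, y}" "x \<noteq> y" by (auto simp: card_2_iff)
    then show "e \<in> pairs V" using \<open>e \<subseteq> V\<close> unfolding pairs_def by blast
  qed
  then show ?thesis using n_subsets[OF f] by simp
qed

lemma handshake:
  assumes f: "finite V" and E: "E \<subseteq> pairs V"
  shows "(\<Sum>v\<in>V. card (nb V E v)) = 2 * card E"
proof -
  have fE: "finite E" using E finite_pairs[OF f] finite_subset by blast
  have 1: "card (nb V E v) = card {e. e \<in> E \<and> v \<in> e}" if v: "v \<in> V" for v
  proof -
    have "bij_betw (\<lambda>u. {u, v}) (nb V E v) {e. e \<in> E \<and> v \<in> e}"
      unfolding bij_betw_def
    proof
      show "inj_on (\<lambda>u. {u, v}) (nb V E v)"
        by (auto simp: inj_on_def doubleton_eq_iff)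
      show "(\<lambda>u. {u, v}) ` nb V E v = {e \<in> E. v \<in> e}"
      proof
        show "(\<lambda>u. {u, v}) ` nb V E v \<subseteq> {e \<in> E. v \<in> e}" unfolding nb_def by auto
        show "{e \<in> E. v \<in> e} \<subseteq> (\<lambda>u. {u, v}) ` nb V E v"
        proof
          fix e assume e: "e \<in> {e \<in> E. v \<in> e}"
          then obtain x y where xy: "x \<in> V" "y \<in> V" "x \<noteq> y" "e = {x, y}"
            using E unfolding pairs_def by blast
          show "e \<in> (\<lambda>u. {u, v}) ` nb V E v"
          proof (cases "v = x")
            case True
            then show ?thesis using xy e unfolding nb_def
              by (auto intro!: image_eqI[where x=y] simp: insert_commute)
          next
            case False
            then have "v = y" using xy e by auto
            then show ?thesis using xy e unfolding nb_def
              by (auto intro!: image_eqI[where x=x])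
          qed
        qed
      qed
    qed
    then show ?thesis by (rule bij_betw_same_card)
  qed
  have "(\<Sum>v\<in>V. card (nb V E v)) = (\<Sum>v\<in>V. card {e. e \<in> E \<and> v \<in> e})"
    using 1 by (rule sum.cong[OF refl])
  also have "\<dots> = (\<Sum>v\<in>V. \<Sum>e\<in>{e. e \<in> E \<and> v \<in> e}. 1)" by simp
  also have "\<dots> = (\<Sum>e\<in>E. \<Sum>v\<in>{v. v \<in> V \<and> v \<in> e}. 1)"
    by (rule sum.swap_restrict[OF f fE])
  also have "\<dots> = (\<Sum>e\<in>E. 2)"
  proof (rule sum.cong[OF refl])
    fix e assume "e \<in> E"
    then obtain x y where xy: "x \<in> V" "y \<in> V" "x \<noteq> y" "e = {x, y}"
      using E unfolding pairs_def by blast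
    then have "{v. v \<in> V \<and> v \<in> e} = {x, y}" by auto
    then show "(\<Sum>v\<in>{v. v \<in> V \<and> v \<in> e}. 1) = (2::nat)" using xy by simp
  qed
  also have "\<dots> = 2 * card E" by simp
  finally show ?thesis .
qed



lemma ex_eqI:
  assumes up: "\<And>E. simple_graph {..<n} E \<Longrightarrow> \<not> contains ({..<n}, E) H \<Longrightarrow> card E \<le> B"
    and w: "simple_graph {..<n} E0" "\<not> contains ({..<n}, E0) H" "card E0 = B"
  shows "ex n H = B"
  unfolding ex_def
proof (rule Max_eqI)
  show "finite {card E |E. simple_graph {..<n} E \<and> \<not> contains ({..<n}, E) H}"
    by (rule finite_subset[of _ "{..B}"]) (use up in auto)
  show "\<And>y. y \<in> {card E |E. simple_graph {..<n} E \<and> \<not> contains ({..<n}, E) H} \<Longrightarrow> y \<le> B"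
    using up by auto
  show "B \<in> {card E |E. simple_graph {..<n} E \<and> \<not> contains ({..<n}, E) H}"
    using w by auto
qed



text \<open>Star (t = 1)\<close>

lemma star_valid:
  assumes E: "E \<subseteq> pairs V"
  shows "valid V E 1 k T S \<longleftrightarrow> (\<exists>c\<in>V. T = {c} \<and> S \<subseteq> nb V E c \<and> card S = k - 1)"
proof
  assume v: "valid V E 1 k T S"
  then obtain c where T: "T = {c}" unfolding valid_def by (auto simp: card_1_singleton_iff)
  have "S \<subseteq> nb V E c"
  proof
    fix s assume s: "s \<in> S"
    then have "s \<noteq> c" "s \<in> V" using v T unfolding valid_def by auto
    then have "{c, s} \<in> E" using v T s unfolding valid_def by auto
    then show "s \<in> nb V E c" using \<open>s \<in> V\<close> unfolding nb_def by (simp add: insert_commute)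
  qed
  then show "\<exists>c\<in>V. T = {c} \<and> S \<subseteq> nb V E c \<and> card S = k - 1"
    using v T unfolding valid_def by auto
next
  assume "\<exists>c\<in>V. T = {c} \<and> S \<subseteq> nb V E c \<and> card S = k - 1"
  then obtain c where c: "c \<in> V" "T = {c}" "S \<subseteq> nb V E c" "card S = k - 1" by auto
  have "S \<subseteq> V - {c}" using c nb_sub[OF E] by blast
  then show "valid V E 1 k T S" unfolding valid_def using c
    by (auto simp: nb_def insert_commute)
qed

lemma star_contains:
  assumes f: "finite V" and E: "E \<subseteq> pairs V" and k: "1 \<le> k"
  shows "contains (V, E) ({..<k}, HE 1 k) \<longleftrightarrow> (\<exists>c\<in>V. k - 1 \<le> card (nb V E c))"
proof -
  have "(\<exists>T S. valid V E 1 k T S) \<longleftrightarrow> (\<exists>c\<in>V. k - 1 \<le> card (nb V E c))"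
  proof
    assume "\<exists>T S. valid V E 1 k T S"
    then obtain T S where "valid V E 1 k T S" by blast
    then obtain c where c: "c \<in> V" "S \<subseteq> nb V E c" "card S = k - 1"
      unfolding star_valid[OF E] by blast
    have "finite (nb V E c)" using f unfolding nb_def by auto
    then have "card S \<le> card (nb V E c)" using c(2) by (rule card_mono)
    then show "\<exists>c\<in>V. k - 1 \<le> card (nb V E c)" using c by auto
  next
    assume "\<exists>c\<in>V. k - 1 \<le> card (nb V E c)"
    then obtain c where c: "c \<in> V" "k - 1 \<le> card (nb V E c)" by auto
    obtain S where S: "S \<subseteq> nb V E c" "card S = k - 1"
      using obtain_subset_with_card_n[OF c(2)] by blast
    have "valid V E 1 k {c} S" unfolding star_valid[OF E] using c S by blast
    then show "\<exists>T S. valid V E 1 k T S" by blast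
  qed
  then show ?thesis using contains_iff[OF f k] by simp
qed

lemma star_free_bound:
  assumes f: "finite V" and E: "E \<subseteq> pairs V" and k: "1 \<le> k"
    and nc: "\<not> contains (V, E) ({..<k}, HE 1 k)"
  shows "2 * card E \<le> card V * (k - 2)"
proof -
  have "\<forall>c\<in>V. card (nb V E c) \<le> k - 2"
  proof
    fix c assume "c \<in> V"
    then have "\<not> k - 1 \<le> card (nb V E c)" using nc star_contains[OF f E k] by blast
    then show "card (nb V E c) \<le> k - 2" by linarith
  qed
  then have "(\<Sum>v\<in>V. card (nb V E v)) \<le> card V * (k - 2)"
    using sum_bounded_above[of V "\<lambda>v. card (nb V E v)" "k - 2"] by simp
  then show ?thesis using handshake[OF f E] by simp
qed

lemma star_unique:
  assumes f: "finite V" and E: "E \<subseteq> pairs V" and k: "2 \<le> k"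
    and c0: "c0 \<in> V" "card (nb V E c0) = k - 1"
    and oth: "\<And>v. v \<in> V \<Longrightarrow> v \<noteq> c0 \<Longrightarrow> card (nb V E v) \<le> k - 2"
  shows "card (copies (V, E) ({..<k}, HE 1 k)) = 1"
proof -
  have fn: "finite (nb V E c)" for c using f unfolding nb_def by auto
  have key: "valid V E 1 k T S \<longleftrightarrow> T = {c0} \<and> S = nb V E c0" for T S
  proof
    assume "valid V E 1 k T S"
    then obtain c where c: "c \<in> V" "T = {c}" "S \<subseteq> nb V E c" "card S = k - 1"
      unfolding star_valid[OF E] by blast
    have "card S \<le> card (nb V E c)" using fn c(3) by (rule card_mono)
    then have "c = c0" using oth[OF c(1)] k c(4) by fastforce
    have "S = nb V E c0" using card_subset_eq[OF fn] c c0 \<open>c = c0\<close> by simp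
    then show "T = {c0} \<and> S = nb V E c0" using c \<open>c = c0\<close> by simp
  next
    assume "T = {c0} \<and> S = nb V E c0"
    then show "valid V E 1 k T S" unfolding star_valid[OF E] using c0 by blast
  qed
  have "{(T, S). valid V E 1 k T S} = {({c0}, nb V E c0)}"
    using key by auto
  then show ?thesis using card_copies_one[OF f] k by simp
qed


text \<open>Book (t = 2)\<close>

lemma book_valid:
  assumes E: "E \<subseteq> pairs V"
  shows "valid V E 2 k T S \<longleftrightarrow> (\<exists>a b. a \<in> V \<and> b \<in> V \<and> a \<noteq> b \<and> T = {a, b} \<and> {a, b} \<in> E \<and>
      S \<subseteq> nb V E a \<and> S \<subseteq> nb V E b \<and> card S = k - 2)"
proof
  assume v: "valid V E 2 k T S"
  then obtain a b where T: "T = {a, b}" "a \<noteq> b" unfolding valid_def by (auto simp: card_2_iff)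
  have ab: "a \<in> V" "b \<in> V" using v T unfolding valid_def by auto
  have nab: "a \<notin> S" "b \<notin> S" using v T unfolding valid_def by auto
  have "{a, b} \<in> E" using v T unfolding valid_def by auto
  moreover have "S \<subseteq> nb V E a"
  proof
    fix s assume s: "s \<in> S"
    then have "s \<noteq> a" "s \<in> V" using v T nab unfolding valid_def by auto
    then have "{a, s} \<in> E" using v T s unfolding valid_def by auto
    then show "s \<in> nb V E a" using \<open>s \<in> V\<close> unfolding nb_def by (simp add: insert_commute)
  qed
  moreover have "S \<subseteq> nb V E b"
  proof
    fix s assume s: "s \<in> S"
    then have "s \<noteq> b" "s \<in> V" using v T nab unfolding valid_def by auto
    then have "{b, s} \<in> E" using v T s unfolding valid_def by auto
    then show "s \<in> nb V E b" using \<open>s \<in> V\<close> unfolding nb_def by (simp add: insert_commute)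
  qed
  ultimately show "\<exists>a b. a \<in> V \<and> b \<in> V \<and> a \<noteq> b \<and> T = {a, b} \<and> {a, b} \<in> E \<and>
      S \<subseteq> nb V E a \<and> S \<subseteq> nb V E b \<and> card S = k - 2"
    using v T ab unfolding valid_def by blast
next
  assume "\<exists>a b. a \<in> V \<and> b \<in> V \<and> a \<noteq> b \<and> T = {a, b} \<and> {a, b} \<in> E \<and>
      S \<subseteq> nb V E a \<and> S \<subseteq> nb V E b \<and> card S = k - 2"
  then obtain a b where c: "a \<in> V" "b \<in> V" "a \<noteq> b" "T = {a, b}" "{a, b} \<in> E"
    "S \<subseteq> nb V E a" "S \<subseteq> nb V E b" "card S = k - 2" by blast
  have "S \<subseteq> V - {a}" "S \<subseteq> V - {b}" using c nb_sub[OF E] by blast+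
  then show "valid V E 2 k T S" unfolding valid_def using c
    by (auto simp: nb_def insert_commute)
qed




definition nn :: "'a set \<Rightarrow> 'a set set \<Rightarrow> 'a \<Rightarrow> 'a set" where
  "nn V E v = {u\<in>V. u \<noteq> v \<and> {u, v} \<notin> E}"

lemma nn_nb_card:
  assumes f: "finite V" and E: "E \<subseteq> pairs V" and v: "v \<in> V"
  shows "card (nb V E v) + card (nn V E v) = card V - 1"
proof -
  have "nb V E v \<union> nn V E v = V - {v}" using nb_sub[OF E, of v] unfolding nn_def nb_def by auto
  moreover have "nb V E v \<inter> nn V E v = {}" unfolding nn_def nb_def by auto
  moreover have "finite (nb V E v)" "finite (nn V E v)" using f unfolding nb_def nn_def by auto
  ultimately have "card (nb V E v) + card (nn V E v) = card (V - {v})"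
    using card_Un_disjoint[of "nb V E v" "nn V E v"] by simp
  then show ?thesis using f v by simp
qed

lemma nn_sym: "x \<in> V \<Longrightarrow> y \<in> nn V E x \<Longrightarrow> x \<in> nn V E y"
  unfolding nn_def by (auto simp: insert_commute)

lemma nb_compl: "v \<in> V \<Longrightarrow> nb V (pairs V - E) v = nn V E v"
  unfolding nb_def nn_def by (auto simp: in_pairs)

lemma nn_sum:
  assumes f: "finite V" and E: "E \<subseteq> pairs V"
  shows "(\<Sum>v\<in>V. card (nn V E v)) = 2 * card (pairs V - E)"
proof -
  have "(\<Sum>v\<in>V. card (nn V E v)) = (\<Sum>v\<in>V. card (nb V (pairs V - E) v))"
    by (rule sum.cong[OF refl]) (simp add: nb_compl)
  also have "\<dots> = 2 * card (pairs V - E)" by (rule handshake[OF f]) auto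
  finally show ?thesis .
qed

lemma nb_not_nn: "s \<in> V \<Longrightarrow> s \<noteq> x \<Longrightarrow> s \<notin> nn V E x \<Longrightarrow> s \<in> nb V E x"
  unfolding nb_def nn_def by auto

lemma book_pair:
  assumes f: "finite V" and E: "E \<subseteq> pairs V" and k: "2 \<le> k"
    and x: "x \<in> V" and z: "z \<in> V" "x \<noteq> z" and xz: "{x, z} \<in> E"
    and X: "X \<subseteq> nb V E x" "X \<subseteq> nb V E z" "k - 2 \<le> card X"
  shows "contains (V, E) ({..<k}, HE 2 k)"
proof -
  obtain S where S: "S \<subseteq> X" "card S = k - 2" using obtain_subset_with_card_n[OF X(3)] by blast
  have "valid V E 2 k {x, z} S" unfolding book_valid[OF E] using x z xz X S by blast
  then show ?thesis using contains_iff[OF f] k by auto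
qed

lemma book_pair_nn:
  assumes f: "finite V" and E: "E \<subseteq> pairs V" and k: "2 \<le> k" and cV: "card V = k + 1"
    and x: "x \<in> V" and z: "z \<in> V" "x \<noteq> z" and xz: "{x, z} \<in> E"
    and c: "card (nn V E x \<union> nn V E z) \<le> 1"
  shows "contains (V, E) ({..<k}, HE 2 k)"
proof -
  define X where "X = (V - {x, z}) - (nn V E x \<union> nn V E z)"
  have "X \<subseteq> nb V E x" "X \<subseteq> nb V E z" unfolding X_def using nb_not_nn by fastforce+
  moreover have "k - 2 \<le> card X"
  proof -
    have "card (V - {x, z}) = k - 1" using cV x z f by (simp add: card_Diff_subset)
    moreover have "finite (nn V E x \<union> nn V E z)" using f unfolding nn_def by auto
    ultimately have "k - 1 - card (nn V E x \<union> nn V E z) \<le> card X"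
      unfolding X_def using diff_card_le_card_Diff[of "nn V E x \<union> nn V E z" "V - {x, z}"] by simp
    then show ?thesis using c by linarith
  qed
  ultimately show ?thesis using book_pair[OF f E k x z xz] by blast
qed

lemma book_nb_big:
  assumes f: "finite V" and E: "E \<subseteq> pairs V" and v: "valid V E 2 k T S"
  shows "\<exists>a b. a \<in> V \<and> b \<in> V \<and> a \<noteq> b \<and> T = {a, b} \<and> {a, b} \<in> E \<and>
      S \<subseteq> nb V E a \<and> S \<subseteq> nb V E b \<and> card S = k - 2 \<and>
      k - 1 \<le> card (nb V E a) \<and> k - 1 \<le> card (nb V E b)"
proof -
  obtain a b where c: "a \<in> V" "b \<in> V" "a \<noteq> b" "T = {a, b}" "{a, b} \<in> E"
    "S \<subseteq> nb V E a" "S \<subseteq> nb V E b" "card S = k - 2"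
    using v unfolding book_valid[OF E] by blast
  have fn: "finite (nb V E w)" for w using f unfolding nb_def by auto
  have fS: "finite S" using fn c(6) finite_subset by blast
  have "b \<in> nb V E a" using c unfolding nb_def by (simp add: insert_commute)
  moreover have "b \<notin> S" using c(7) nb_sub[OF E, of b] by auto
  ultimately have "insert b S \<subseteq> nb V E a" using c by auto
  then have "card (insert b S) \<le> card (nb V E a)" using fn[of a] by (intro card_mono)
  then have A: "k - 1 \<le> card (nb V E a)" using \<open>b \<notin> S\<close> fS c(8) by simp
  have "a \<in> nb V E b" using c unfolding nb_def by simp
  moreover have "a \<notin> S" using c(6) nb_sub[OF E, of a] by auto
  ultimately have "insert a S \<subseteq> nb V E b" using c by auto
  then have "card (insert a S) \<le> card (nb V E b)" using fn[of b] by (intro card_mono)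
  then have B: "k - 1 \<le> card (nb V E b)" using \<open>a \<notin> S\<close> fS c(8) by simp
  show ?thesis using c A B by blast
qed

lemma book_bound_k:
  assumes f: "finite V" and E: "E \<subseteq> pairs V" and cV: "card V = k" and k: "2 \<le> k"
    and nc: "\<not> contains (V, E) ({..<k}, HE 2 k)"
  shows "2 * card E \<le> k * (k - 2) + 1"
proof -
  define F where "F = {v\<in>V. k - 1 \<le> card (nb V E v)}"
  have fn: "finite (nb V E w)" for w using f unfolding nb_def by auto
  have full: "nb V E a = V - {a}" if "a \<in> F" for a
  proof -
    have "nb V E a \<subseteq> V - {a}" by (rule nb_sub[OF E])
    moreover have "card (V - {a}) = k - 1" using that cV f unfolding F_def by simp
    moreover have "card (nb V E a) \<le> card (V - {a})" using calculation(1) f by (intro card_mono) auto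
    moreover have "k - 1 \<le> card (nb V E a)" using that unfolding F_def by simp
    ultimately show ?thesis using card_subset_eq[of "V - {a}" "nb V E a"] f by simp
  qed
  have F1: "card F \<le> 1"
  proof -
    have "finite F" using f unfolding F_def by auto
    moreover have "\<forall>a\<in>F. \<forall>b\<in>F. a = b"
    proof (intro ballI, rule ccontr)
      fix a b assume a: "a \<in> F" and b: "b \<in> F" and ab: "a \<noteq> b"
      have aV: "a \<in> V" and bV: "b \<in> V" using a b unfolding F_def by auto
      have "b \<in> nb V E a" using full[OF a] bV ab by auto
      then have "{a, b} \<in> E" unfolding nb_def by (simp add: insert_commute)
      moreover have "V - {a, b} \<subseteq> nb V E a" "V - {a, b} \<subseteq> nb V E b" using full a b by auto
      moreover have "k - 2 \<le> card (V - {a, b})" using cV aV bV ab f by (simp add: card_Diff_subset)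
      ultimately have "contains (V, E) ({..<k}, HE 2 k)" using book_pair[OF f E k aV bV ab] by blast
      then show False using nc by simp
    qed
    ultimately show ?thesis using card_le_Suc0_iff_eq by auto
  qed
  have "(\<Sum>v\<in>V. card (nb V E v)) \<le> (\<Sum>v\<in>V. (k - 2) + (if v \<in> F then 1 else 0))"
  proof (rule sum_mono)
    fix v assume v: "v \<in> V"
    have "card (nb V E v) \<le> card (V - {v})" using nb_sub[OF E] f by (intro card_mono) auto
    then have "card (nb V E v) \<le> k - 1" using cV v f by simp
    then show "card (nb V E v) \<le> (k - 2) + (if v \<in> F then 1 else 0)"
      using v k unfolding F_def by auto
  qed
  also have "\<dots> = k * (k - 2) + card F"
  proof -
    have "(\<Sum>v\<in>V. (if v \<in> F then 1 else 0::nat)) = card (V \<inter> F)"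
      using f by (simp add: sum.If_cases)
    moreover have "V \<inter> F = F" unfolding F_def by auto
    ultimately show ?thesis using cV by (simp add: sum.distrib)
  qed
  finally show ?thesis using handshake[OF f E] F1 by simp
qed

lemma book_bound_k1:
  assumes f: "finite V" and E: "E \<subseteq> pairs V" and cV: "card V = k + 1" and k: "4 \<le> k" and ek: "even k"
    and c: "2 * card (pairs V - E) \<le> k + 2"
  shows "contains (V, E) ({..<k}, HE 2 k)"
proof -
  let ?N = "nn V E"
  have k2: "2 \<le> k" using k by simp
  have fN: "finite (?N v)" for v using f unfolding nn_def by auto
  have sumN: "(\<Sum>v\<in>V. card (?N v)) \<le> k + 2" using nn_sum[OF f E] c by simp
  show ?thesis
  proof (cases "\<exists>a\<in>V. ?N a = {}")
    case True
    then obtain a where a: "a \<in> V" "?N a = {}" by auto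
    have "\<exists>b\<in>V - {a}. card (?N b) \<le> 1"
    proof (rule ccontr)
      assume "\<not> ?thesis"
      then have "\<forall>b\<in>V - {a}. 2 \<le> card (?N b)" by force
      then have "(\<Sum>b\<in>V - {a}. 2) \<le> (\<Sum>b\<in>V - {a}. card (?N b))" by (intro sum_mono) auto
      moreover have "(\<Sum>b\<in>V - {a}. card (?N b)) \<le> (\<Sum>v\<in>V. card (?N v))"
        using f by (intro sum_mono2) auto
      moreover have "(\<Sum>b\<in>V - {a}. (2::nat)) = 2 * k" using cV a f by simp
      ultimately show False using sumN k by linarith
    qed
    then obtain b where b: "b \<in> V" "b \<noteq> a" "card (?N b) \<le> 1" by auto
    have "b \<in> nb V E a" using a b nb_not_nn[of b V a E] by auto
    then have "{a, b} \<in> E" unfolding nb_def by (simp add: insert_commute)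
    then show ?thesis using book_pair_nn[OF f E k2 cV a(1) b(1) b(2)[symmetric]] a b by simp
  next
    case False
    then have ge1: "\<forall>v\<in>V. 1 \<le> card (?N v)" using fN by (simp add: Suc_le_eq card_gt_0_iff)
    have "(\<Sum>v\<in>V. (1::nat)) \<le> (\<Sum>v\<in>V. card (?N v))" using ge1 by (intro sum_mono) auto
    then have lo: "k + 1 \<le> (\<Sum>v\<in>V. card (?N v))" using cV by simp
    have even: "even (\<Sum>v\<in>V. card (?N v))" using nn_sum[OF f E] by simp
    have eq: "(\<Sum>v\<in>V. card (?N v)) = k + 2"
    proof -
      have "odd (k + 1)" using ek by simp
      then have "(\<Sum>v\<in>V. card (?N v)) \<noteq> k + 1" using even by metis
      then show ?thesis using lo sumN by linarith
    qed
    obtain y where y: "y \<in> V" "2 \<le> card (?N y)"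
    proof (rule ccontr)
      assume "\<not> thesis"
      then have "\<forall>v\<in>V. card (?N v) \<le> 1" using that by force
      then have "(\<Sum>v\<in>V. card (?N v)) \<le> (\<Sum>v\<in>V. 1)" by (intro sum_mono) auto
      then show False using eq cV by simp
    qed
    have split: "(\<Sum>v\<in>V. card (?N v)) = card (?N y) + (\<Sum>v\<in>V - {y}. card (?N v))"
      using f y(1) by (simp add: sum.remove)
    have lo2: "k \<le> (\<Sum>v\<in>V - {y}. card (?N v))"
    proof -
      have "(\<Sum>v\<in>V - {y}. (1::nat)) \<le> (\<Sum>v\<in>V - {y}. card (?N v))" using ge1 by (intro sum_mono) auto
      then show ?thesis using cV y f by simp
    qed
    have Ny: "card (?N y) = 2" using split eq lo2 y by linarith
    have one: "card (?N w) = 1" if w: "w \<in> V" "w \<noteq> y" for w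
    proof (rule ccontr)
      assume "card (?N w) \<noteq> 1"
      then have w2: "2 \<le> card (?N w)" using ge1 w by force
      have "(\<Sum>v\<in>V - {y}. card (?N v)) = card (?N w) + (\<Sum>v\<in>V - {y} - {w}. card (?N v))"
        using f w by (simp add: sum.remove)
      moreover have "(\<Sum>v\<in>V - {y} - {w}. (1::nat)) \<le> (\<Sum>v\<in>V - {y} - {w}. card (?N v))"
        using ge1 by (intro sum_mono) auto
      moreover have "(\<Sum>v\<in>V - {y} - {w}. (1::nat)) = k - 1" using cV y w f by simp
      ultimately show False using split eq Ny w2 k by linarith
    qed
    obtain x z where xz: "?N y = {x, z}" "x \<noteq> z" using Ny by (auto simp: card_2_iff)
    have xV: "x \<in> V" "x \<noteq> y" and zV: "z \<in> V" "z \<noteq> y" using xz unfolding nn_def by auto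
    have "y \<in> ?N x" using nn_sym[OF y(1)] xz by auto
    then have Nx: "?N x = {y}" using one[OF xV] by (auto simp: card_1_singleton_iff)
    have "y \<in> ?N z" using nn_sym[OF y(1)] xz by auto
    then have Nz: "?N z = {y}" using one[OF zV] by (auto simp: card_1_singleton_iff)
    have "z \<in> nb V E x" using nb_not_nn[of z V x E] zV xz Nx by auto
    then have "{x, z} \<in> E" unfolding nb_def by (simp add: insert_commute)
    then show ?thesis using book_pair_nn[OF f E k2 cV xV(1) zV(1) xz(2)] Nx Nz by simp
  qed
qed



definition Mat :: "nat \<Rightarrow> nat \<Rightarrow> nat set set" where
  "Mat a m = (\<lambda>i. {a + 2 * i, a + 2 * i + 1}) ` {..<m}"

lemma mat_card: "card (Mat a m) = m"
proof -
  have "inj_on (\<lambda>i. {a + 2 * i, a + 2 * i + 1}) {..<m}"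
    by (auto simp: inj_on_def doubleton_eq_iff)
  then show ?thesis unfolding Mat_def by (simp add: card_image)
qed

lemma mat_mem: "{u, v} \<in> Mat a m \<longleftrightarrow>
   (\<exists>i<m. (u = a + 2 * i \<and> v = a + 2 * i + 1) \<or> (u = a + 2 * i + 1 \<and> v = a + 2 * i))"
  unfolding Mat_def by (auto simp: doubleton_eq_iff)

lemma mat_elem: "e \<in> Mat a m \<Longrightarrow> x \<in> e \<Longrightarrow> a \<le> x \<and> x < a + 2 * m"
  unfolding Mat_def by auto

lemma mat_elem2: "{u, v} \<in> Mat a m \<Longrightarrow> a \<le> u \<and> u < a + 2 * m"
  using mat_elem by blast

lemma mat_sub: "{a..<a + 2 * m} \<subseteq> V \<Longrightarrow> Mat a m \<subseteq> pairs V"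
proof
  fix e assume V: "{a..<a + 2 * m} \<subseteq> V" and "e \<in> Mat a m"
  then obtain i where i: "i < m" "e = {a + 2 * i, a + 2 * i + 1}" unfolding Mat_def by auto
  have "a + 2 * i \<in> V" "a + 2 * i + 1 \<in> V" using V i by auto
  then show "e \<in> pairs V" using i by (simp add: in_pairs)
qed

lemma mat_partner:
  assumes "a \<le> v" "v < a + 2 * m"
  shows "\<exists>p. p \<noteq> v \<and> a \<le> p \<and> p < a + 2 * m \<and> {p, v} \<in> Mat a m"
proof (cases "even (v - a)")
  case True
  then obtain i where i: "v - a = 2 * i" by (rule evenE)
  then have "v = a + 2 * i" "i < m" using assms by auto
  then have "{v + 1, v} = {a + 2 * i, a + 2 * i + 1}" by (simp add: insert_commute)
  then have "{v + 1, v} \<in> Mat a m" using \<open>i < m\<close> unfolding Mat_def by auto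
  then show ?thesis using \<open>v = a + 2 * i\<close> \<open>i < m\<close> by (intro exI[of _ "v + 1"]) simp
next
  case False
  then obtain i where i: "v - a = 2 * i + 1" by (rule oddE)
  then have "v = a + 2 * i + 1" "i < m" using assms by auto
  then have "{v - 1, v} = {a + 2 * i, a + 2 * i + 1}" by simp
  then have "{v - 1, v} \<in> Mat a m" using \<open>i < m\<close> unfolding Mat_def by auto
  then show ?thesis using \<open>v = a + 2 * i + 1\<close> \<open>i < m\<close> by (intro exI[of _ "v - 1"]) simp
qed

lemma mat_unique:
  assumes "{u, v} \<in> Mat a m" "{w, v} \<in> Mat a m" shows "u = w"
proof -
  obtain i where i: "(u = a + 2 * i \<and> v = a + 2 * i + 1) \<or> (u = a + 2 * i + 1 \<and> v = a + 2 * i)"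
    using assms(1) unfolding mat_mem by blast
  obtain j where j: "(w = a + 2 * j \<and> v = a + 2 * j + 1) \<or> (w = a + 2 * j + 1 \<and> v = a + 2 * j)"
    using assms(2) unfolding mat_mem by blast
  from i j show ?thesis
    by (elim disjE conjE) (simp_all, presburger+)
qed

lemma sing_notin_pairs: "{v} \<notin> pairs V"
  unfolding pairs_def by (auto simp: singleton_insert_inj_eq)

lemma sing_notin:
  assumes "M \<subseteq> pairs V" shows "{v} \<notin> M"
proof
  assume "{v} \<in> M"
  from assms this have "{v} \<in> pairs V" by (rule subsetD)
  then show False using sing_notin_pairs[of v V] by simp
qed

lemma nb_compl_M:
  assumes "M \<subseteq> pairs V" "v \<in> V"
  shows "nb V (pairs V - M) v = {u\<in>V. u \<noteq> v \<and> {u, v} \<notin> M}"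
proof (rule set_eqI)
  fix u
  show "u \<in> nb V (pairs V - M) v \<longleftrightarrow> u \<in> {u\<in>V. u \<noteq> v \<and> {u, v} \<notin> M}"
    unfolding nb_def using assms(2) by (auto simp: in_pairs)
qed

lemma nn_compl_M:
  assumes "M \<subseteq> pairs V" "v \<in> V"
  shows "nn V (pairs V - M) v = {u\<in>V. {u, v} \<in> M}"
proof (rule set_eqI)
  fix u
  have "{u, v} \<in> M \<Longrightarrow> u \<noteq> v" using sing_notin[OF assms(1), of v] by auto
  then show "u \<in> nn V (pairs V - M) v \<longleftrightarrow> u \<in> {u\<in>V. {u, v} \<in> M}"
    unfolding nn_def using assms(2) by (auto simp: in_pairs)
qed

lemma nb_small:
  assumes f: "finite V" and M: "M \<subseteq> pairs V" and v: "v \<in> V" and p: "{p, v} \<in> M"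
  shows "card (nb V (pairs V - M) v) \<le> card V - 2"
proof -
  have "{p, v} \<in> pairs V" using M p by blast
  then have pv: "p \<in> V" "p \<noteq> v" by (simp_all add: in_pairs)
  have "nb V (pairs V - M) v \<subseteq> V - {v, p}" using nb_compl_M[OF M v] p by auto
  then have "card (nb V (pairs V - M) v) \<le> card (V - {v, p})" using f by (intro card_mono) auto
  also have "\<dots> = card V - 2" using f v pv by (simp add: card_Diff_subset)
  finally show ?thesis .
qed

lemma card_compl:
  assumes "finite V" "M \<subseteq> pairs V"
  shows "card (pairs V - M) = (card V choose 2) - card M"
  using assms by (simp add: card_Diff_subset finite_subset[OF _ finite_pairs] card_pairs)

lemma choose2_odd: "(2 * m + 1) choose 2 = (2 * m + 1) * m"
  by (simp add: choose_two)

lemma choose2_even: "(2 * m) choose 2 = m * (2 * m - 1)"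
proof -
  have "(2 * m) choose 2 = 2 * m * (2 * m - 1) div 2" by (simp add: choose_two)
  also have "\<dots> = m * (2 * m - 1)" by simp
  finally show ?thesis .
qed



lemma nb_union_in:
  assumes X: "X \<subseteq> pairs V1" and d: "V1 \<inter> C = {}" and v: "v \<in> V1" and V2: "V1 \<subseteq> V2"
  shows "nb V2 (X \<union> pairs C) v = nb V1 X v"
proof (rule set_eqI)
  fix u
  have 1: "{u, v} \<notin> pairs C" using v d by (auto simp: in_pairs)
  have 2: "{u, v} \<in> X \<Longrightarrow> u \<in> V1" using X by (auto simp: in_pairs dest!: subsetD)
  show "u \<in> nb V2 (X \<union> pairs C) v \<longleftrightarrow> u \<in> nb V1 X v"
    unfolding nb_def using 1 2 V2 by auto
qed

lemma nb_union_C: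
  assumes X: "X \<subseteq> pairs V1" and d: "V1 \<inter> C = {}" and v: "v \<in> C"
  shows "nb V2 (X \<union> pairs C) v \<subseteq> C - {v}"
proof
  fix u assume u: "u \<in> nb V2 (X \<union> pairs C) v"
  then have "{u, v} \<in> X \<or> {u, v} \<in> pairs C" unfolding nb_def by auto
  moreover have "{u, v} \<notin> X"
  proof
    assume "{u, v} \<in> X"
    then have "{u, v} \<in> pairs V1" using X by blast
    then have "v \<in> V1" by (simp add: in_pairs)
    then show False using v d by auto
  qed
  ultimately have "{u, v} \<in> pairs C" by simp
  then show "u \<in> C - {v}" by (simp add: in_pairs)
qed

lemma pairs_disj: "A \<inter> B = {} \<Longrightarrow> pairs A \<inter> pairs B = {}"
  unfolding pairs_def by (auto simp: doubleton_eq_iff)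

lemma pairs_mono: "A \<subseteq> B \<Longrightarrow> pairs A \<subseteq> pairs B"
  unfolding pairs_def by blast

lemma arith1: "1 \<le> (m::nat) \<Longrightarrow> (2 * m + 1) * (2 * m - 1) + 1 = 4 * (m * m)"
  by (cases m) (auto simp: algebra_simps)

lemma arith2: "1 \<le> (m::nat) \<Longrightarrow> (4 * m + 1) * (2 * m - 1) + 2 * m + 1 = 8 * (m * m)"
  by (cases m) (auto simp: algebra_simps)

lemma arith3: "(m::nat) * (2 * m - 1) + m = 2 * (m * m)"
  by (cases m) (auto simp: algebra_simps)

context
  fixes m :: nat
  assumes m: "2 \<le> m"
begin

definition "V1 = {..<2 * m + 1}"
definition "M1 = Mat 1 m"
definition "G1 = pairs V1 - M1"
definition "W1 = pairs V1 - insert {0, 1} M1"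
definition "C2 = {2 * m + 1..<4 * m + 1}"
definition "V2 = {..<4 * m + 1}"
definition "G2 = G1 \<union> pairs C2"
definition "W2 = W1 \<union> pairs C2"

lemma fV1: "finite V1" unfolding V1_def by simp
lemma cV1: "card V1 = 2 * m + 1" unfolding V1_def by simp
lemma M1sub: "M1 \<subseteq> pairs V1" unfolding M1_def V1_def by (rule mat_sub) auto
lemma WM1sub: "insert {0, 1} M1 \<subseteq> pairs V1" using M1sub m unfolding V1_def by (auto simp: in_pairs)
lemma G1sub: "G1 \<subseteq> pairs V1" unfolding G1_def by auto
lemma W1sub: "W1 \<subseteq> pairs V1" unfolding W1_def by auto
lemma n01: "{0, 1} \<notin> M1" unfolding M1_def using mat_elem2[of 0 1 1 m] by auto

lemma card_G1: "card G1 = 2 * (m * m)"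
proof -
  have "card G1 = (2 * m + 1) * m - m" unfolding G1_def
    using card_compl[OF fV1 M1sub] cV1 choose2_odd[of m] mat_card[of 1 m] unfolding M1_def by simp
  then show ?thesis by (simp add: algebra_simps)
qed

lemma card_W1: "card W1 = 2 * (m * m) - 1"
proof -
  have "card (insert {0, 1} M1) = m + 1" using n01 mat_card[of 1 m]
    finite_subset[OF M1sub finite_pairs[OF fV1]] unfolding M1_def by simp
  then have "card W1 = (2 * m + 1) * m - (m + 1)" unfolding W1_def
    using card_compl[OF fV1 WM1sub] cV1 choose2_odd[of m] by simp
  then show ?thesis by (simp add: algebra_simps)
qed

lemma partner1: "v \<in> V1 \<Longrightarrow> v \<noteq> 0 \<Longrightarrow> \<exists>p. {p, v} \<in> M1"
  using mat_partner[of 1 v m] unfolding V1_def M1_def by auto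

lemma nb_G1_0: "nb V1 G1 0 = V1 - {0}"
proof -
  have "0 \<in> V1" unfolding V1_def by simp
  moreover have "{u, 0} \<notin> M1" for u unfolding M1_def using mat_elem[of "{u, 0}" 1 m 0] by auto
  ultimately show ?thesis unfolding G1_def using nb_compl_M[OF M1sub] by auto
qed

lemma nb_G1_other: "v \<in> V1 \<Longrightarrow> v \<noteq> 0 \<Longrightarrow> card (nb V1 G1 v) \<le> 2 * m - 1"
  using partner1 nb_small[OF fV1 M1sub] cV1 unfolding G1_def by fastforce

lemma nb_W1: "v \<in> V1 \<Longrightarrow> card (nb V1 W1 v) \<le> 2 * m - 1"
proof -
  assume v: "v \<in> V1"
  have "\<exists>p. {p, v} \<in> insert {0, 1} M1"
  proof (cases "v = 0")
    case True then show ?thesis by (intro exI[of _ 1]) (simp add: insert_commute)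
  next
    case False then show ?thesis using partner1[OF v] by blast
  qed
  then show ?thesis using nb_small[OF fV1 WM1sub v] cV1 unfolding W1_def by fastforce
qed

lemma star1:
  "\<exists>E. simple_graph {..<2 * m + 1} E \<and>
     card E = ex (2 * m + 1) ({..<2 * m + 1}, HE 1 (2 * m + 1)) + 1 \<and>
     card (copies ({..<2 * m + 1}, E) ({..<2 * m + 1}, HE 1 (2 * m + 1))) = 1"
proof -
  let ?k = "2 * m + 1"
  have k1: "1 \<le> ?k" "2 \<le> ?k" using m by auto
  have ex: "ex ?k ({..<?k}, HE 1 ?k) = 2 * (m * m) - 1"
  proof (rule ex_eqI)
    fix E assume sg: "simple_graph {..<?k} E" and nc: "\<not> contains ({..<?k}, E) ({..<?k}, HE 1 ?k)"
    have "2 * card E \<le> ?k * (?k - 2)"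
      using star_free_bound[of "{..<?k}" E ?k] sg nc k1 unfolding simple_graph_pairs by auto
    then show "card E \<le> 2 * (m * m) - 1" using arith1[of m] m by simp
  next
    show "simple_graph {..<?k} W1" using W1sub unfolding simple_graph_pairs V1_def by auto
    show "\<not> contains ({..<?k}, W1) ({..<?k}, HE 1 ?k)"
    proof
      assume "contains ({..<?k}, W1) ({..<?k}, HE 1 ?k)"
      then obtain c where c: "c \<in> V1" "?k - 1 \<le> card (nb V1 W1 c)"
        using star_contains[OF fV1 W1sub k1(1)] unfolding V1_def by auto
      then show False using nb_W1[OF c(1)] m by simp
    qed
    show "card W1 = 2 * (m * m) - 1" by (rule card_W1)
  qed
  have "card (copies (V1, G1) ({..<?k}, HE 1 ?k)) = 1"
  proof (rule star_unique[OF fV1 G1sub k1(2)])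
    show "0 \<in> V1" unfolding V1_def by simp
    show "card (nb V1 G1 0) = ?k - 1" using nb_G1_0 cV1 fV1 \<open>0 \<in> V1\<close> by simp
    show "\<And>v. v \<in> V1 \<Longrightarrow> v \<noteq> 0 \<Longrightarrow> card (nb V1 G1 v) \<le> ?k - 2" using nb_G1_other by simp
  qed
  moreover have "simple_graph {..<?k} G1" using G1sub unfolding simple_graph_pairs V1_def by auto
  moreover have "card G1 = ex ?k ({..<?k}, HE 1 ?k) + 1" using ex card_G1 m by simp
  ultimately show ?thesis unfolding V1_def by blast
qed


lemma fV2: "finite V2" unfolding V2_def by simp
lemma dC: "V1 \<inter> C2 = {}" unfolding V1_def C2_def by auto
lemma V12: "V1 \<subseteq> V2" unfolding V1_def V2_def by auto
lemma V1C: "V2 = V1 \<union> C2" unfolding V1_def V2_def C2_def by auto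
lemma cC2: "card C2 = 2 * m" unfolding C2_def by simp
lemma G2sub: "G2 \<subseteq> pairs V2" unfolding G2_def using G1sub pairs_mono[of V1 V2] pairs_mono[of C2 V2] V1C by auto
lemma W2sub: "W2 \<subseteq> pairs V2" unfolding W2_def using W1sub pairs_mono[of V1 V2] pairs_mono[of C2 V2] V1C by auto

lemma nbC: "v \<in> C2 \<Longrightarrow> X \<subseteq> pairs V1 \<Longrightarrow> card (nb V2 (X \<union> pairs C2) v) \<le> 2 * m - 1"
proof -
  assume v: "v \<in> C2" and X: "X \<subseteq> pairs V1"
  have "card (nb V2 (X \<union> pairs C2) v) \<le> card (C2 - {v})"
    using nb_union_C[OF X dC v] by (intro card_mono) (auto simp: C2_def)
  then show ?thesis using cC2 v by (simp add: C2_def)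
qed

lemma card_pairsC2: "card (pairs C2) = m * (2 * m - 1)"
  using card_pairs[of C2] cC2 choose2_even[of m] by (simp add: C2_def)

lemma star2:
  "\<exists>E. simple_graph {..<4 * m + 1} E \<and>
     card E = ex (4 * m + 1) ({..<2 * m + 1}, HE 1 (2 * m + 1)) + 1 \<and>
     card (copies ({..<4 * m + 1}, E) ({..<2 * m + 1}, HE 1 (2 * m + 1))) = 1"
proof -
  let ?k = "2 * m + 1"
  let ?n = "4 * m + 1"
  have k1: "1 \<le> ?k" "2 \<le> ?k" using m by auto
  have fin1: "finite (pairs V1)" "finite (pairs C2)" using fV1 finite_pairs[of C2] by (auto simp: C2_def finite_pairs)
  have disj: "pairs V1 \<inter> pairs C2 = {}" by (rule pairs_disj[OF dC])
  have cardW2: "card W2 = 4 * (m * m) - m - 1"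
  proof -
    have "card W2 = card W1 + card (pairs C2)" unfolding W2_def
      using W1sub disj fin1 by (intro card_Un_disjoint) (auto intro: finite_subset)
    then show ?thesis using card_W1 card_pairsC2 arith3[of m] m by simp
  qed
  have cardG2: "card G2 = 4 * (m * m) - m"
  proof -
    have "card G2 = card G1 + card (pairs C2)" unfolding G2_def
      using G1sub disj fin1 by (intro card_Un_disjoint) (auto intro: finite_subset)
    then show ?thesis using card_G1 card_pairsC2 arith3[of m] m by simp
  qed
  have nbW2: "card (nb V2 W2 v) \<le> 2 * m - 1" if v: "v \<in> V2" for v
  proof (cases "v \<in> V1")
    case True
    then show ?thesis using nb_union_in[OF W1sub dC True V12] nb_W1[OF True] unfolding W2_def by simp
  next
    case False
    then have "v \<in> C2" using v V1C by auto
    then show ?thesis using nbC W1sub unfolding W2_def by blast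
  qed
  have ex: "ex ?n ({..<?k}, HE 1 ?k) = 4 * (m * m) - m - 1"
  proof (rule ex_eqI)
    fix E assume sg: "simple_graph {..<?n} E" and nc: "\<not> contains ({..<?n}, E) ({..<?k}, HE 1 ?k)"
    have "2 * card E \<le> ?n * (?k - 2)"
      using star_free_bound[of "{..<?n}" E ?k] sg nc k1 unfolding simple_graph_pairs by auto
    then show "card E \<le> 4 * (m * m) - m - 1" using arith2[of m] m by simp
  next
    show "simple_graph {..<?n} W2" using W2sub unfolding simple_graph_pairs V2_def by auto
    show "\<not> contains ({..<?n}, W2) ({..<?k}, HE 1 ?k)"
    proof
      assume "contains ({..<?n}, W2) ({..<?k}, HE 1 ?k)"
      then obtain c where c: "c \<in> V2" "?k - 1 \<le> card (nb V2 W2 c)"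
        using star_contains[OF fV2 W2sub k1(1)] unfolding V2_def by auto
      then show False using nbW2[OF c(1)] m by simp
    qed
    show "card W2 = 4 * (m * m) - m - 1" by (rule cardW2)
  qed
  have "card (copies (V2, G2) ({..<?k}, HE 1 ?k)) = 1"
  proof (rule star_unique[OF fV2 G2sub k1(2)])
    show "0 \<in> V2" unfolding V2_def by simp
    have "0 \<in> V1" unfolding V1_def by simp
    then have "nb V2 G2 0 = V1 - {0}" using nb_union_in[OF G1sub dC _ V12] nb_G1_0 unfolding G2_def by simp
    then show "card (nb V2 G2 0) = ?k - 1" using cV1 fV1 \<open>0 \<in> V1\<close> by simp
    show "card (nb V2 G2 v) \<le> ?k - 2" if v: "v \<in> V2" "v \<noteq> 0" for v
    proof (cases "v \<in> V1")
      case True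
      then show ?thesis using nb_union_in[OF G1sub dC True V12] nb_G1_other[OF True v(2)]
        unfolding G2_def by simp
    next
      case False
      then have "v \<in> C2" using v V1C by auto
      then show ?thesis using nbC G1sub unfolding G2_def by fastforce
    qed
  qed
  moreover have "simple_graph {..<?n} G2" using G2sub unfolding simple_graph_pairs V2_def by auto
  moreover have "card G2 = ex ?n ({..<?k}, HE 1 ?k) + 1"
  proof -
    have "2 * m \<le> m * m" using mult_le_mono1[OF m, of m] by simp
    then show ?thesis using ex cardG2 m by linarith
  qed
  ultimately show ?thesis unfolding V2_def by blast
qed

end



lemma book_R:
  assumes E: "E \<subseteq> pairs V" and ab: "a \<noteq> b" "{a, b} \<in> E"
    and S: "S \<subseteq> nb V E a" "S \<subseteq> nb V E b"
  shows "nn V E a \<subseteq> (V - {a, b}) - S" "nn V E b \<subseteq> (V - {a, b}) - S"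
proof -
  show "nn V E a \<subseteq> (V - {a, b}) - S"
  proof
    fix u assume u: "u \<in> nn V E a"
    then have "u \<in> V" "u \<noteq> a" "{u, a} \<notin> E" unfolding nn_def by auto
    moreover have "u \<noteq> b" using ab \<open>{u, a} \<notin> E\<close> by (auto simp: insert_commute)
    moreover have "u \<notin> S" using S \<open>{u, a} \<notin> E\<close> unfolding nb_def by auto
    ultimately show "u \<in> (V - {a, b}) - S" by auto
  qed
  show "nn V E b \<subseteq> (V - {a, b}) - S"
  proof
    fix u assume u: "u \<in> nn V E b"
    then have "u \<in> V" "u \<noteq> b" "{u, b} \<notin> E" unfolding nn_def by auto
    moreover have "u \<noteq> a" using ab \<open>{u, b} \<notin> E\<close> by auto
    moreover have "u \<notin> S" using S \<open>{u, b} \<notin> E\<close> unfolding nb_def by auto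
    ultimately show "u \<in> (V - {a, b}) - S" by auto
  qed
qed

lemma card_R:
  assumes f: "finite V" and E: "E \<subseteq> pairs V" and a: "a \<in> V" "b \<in> V" "a \<noteq> b"
    and S: "S \<subseteq> nb V E a" "S \<subseteq> nb V E b"
  shows "card ((V - {a, b}) - S) = card V - 2 - card S"
proof -
  have "S \<subseteq> V - {a, b}" using S nb_sub[OF E, of a] nb_sub[OF E, of b] by auto
  moreover have "finite S" using calculation f finite_subset by blast
  ultimately have "card ((V - {a, b}) - S) = card (V - {a, b}) - card S"
    by (simp add: card_Diff_subset)
  then show ?thesis using f a by (simp add: card_Diff_subset)
qed

lemma card_one_eq: "card R = 1 \<Longrightarrow> x \<in> R \<Longrightarrow> y \<in> R \<Longrightarrow> x = y"
  by (auto simp: card_1_singleton_iff)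

lemma card_one_two: "card R = 1 \<Longrightarrow> x \<in> R \<Longrightarrow> y \<in> R \<Longrightarrow> x \<noteq> y \<Longrightarrow> False"
  using card_one_eq[of R x y] by simp

lemma arith4: "(2 * (m::nat)) * (2 * m - 2) = 4 * (m * m) - 4 * m"
  by (cases m) (auto simp: algebra_simps)

context
  fixes m :: nat
  assumes m: "2 \<le> m"
begin

definition "VB = {..<2 * m}"
definition "GB = pairs VB - Mat 2 (m - 1)"
definition "WB = pairs VB - Mat 0 m"

lemma fVB: "finite VB" unfolding VB_def by simp
lemma cVB: "card VB = 2 * m" unfolding VB_def by simp
lemma MB1: "Mat 2 (m - 1) \<subseteq> pairs VB" unfolding VB_def by (rule mat_sub) (use m in auto)
lemma MB2: "Mat 0 m \<subseteq> pairs VB" unfolding VB_def by (rule mat_sub) auto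
lemma GBsub: "GB \<subseteq> pairs VB" unfolding GB_def by auto
lemma WBsub: "WB \<subseteq> pairs VB" unfolding WB_def by auto

lemma nb_WB: "v \<in> VB \<Longrightarrow> card (nb VB WB v) \<le> 2 * m - 2"
proof -
  assume v: "v \<in> VB"
  obtain p where "{p, v} \<in> Mat 0 m" using mat_partner[of 0 v m] v unfolding VB_def by auto
  then show ?thesis using nb_small[OF fVB MB2 v] cVB unfolding WB_def by simp
qed

lemma nb_GB: "v \<in> VB \<Longrightarrow> 2 \<le> v \<Longrightarrow> card (nb VB GB v) \<le> 2 * m - 2"
proof -
  assume v: "v \<in> VB" "2 \<le> v"
  have "v < 2 + 2 * (m - 1)" using v m unfolding VB_def by auto
  then obtain p where "{p, v} \<in> Mat 2 (m - 1)" using mat_partner[of 2 v "m - 1"] v by auto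
  then show ?thesis using nb_small[OF fVB MB1 v(1)] cVB unfolding GB_def by simp
qed

lemma nb_GB01: "x < 2 \<Longrightarrow> nb VB GB x = VB - {x}"
proof -
  assume x: "x < 2"
  then have "x \<in> VB" unfolding VB_def using m by simp
  moreover have "{u, x} \<notin> Mat 2 (m - 1)" for u using mat_elem[of "{u, x}" 2 "m - 1" x] x by auto
  ultimately show ?thesis unfolding GB_def using nb_compl_M[OF MB1] by auto
qed

lemma book1:
  "\<exists>E. simple_graph {..<2 * m} E \<and>
     card E = ex (2 * m) ({..<2 * m}, HE 2 (2 * m)) + 1 \<and>
     card (copies ({..<2 * m}, E) ({..<2 * m}, HE 2 (2 * m))) = 1"
proof -
  let ?k = "2 * m"
  have k2: "2 \<le> ?k" using m by auto
  have ex: "ex ?k ({..<?k}, HE 2 ?k) = 2 * (m * m) - 2 * m"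
  proof (rule ex_eqI)
    fix E assume sg: "simple_graph {..<?k} E" and nc: "\<not> contains ({..<?k}, E) ({..<?k}, HE 2 ?k)"
    have "2 * card E \<le> ?k * (?k - 2) + 1"
      using book_bound_k[of "{..<?k}" E ?k] sg nc k2 unfolding simple_graph_pairs by auto
    then show "card E \<le> 2 * (m * m) - 2 * m" using arith4[of m] by linarith
  next
    show "simple_graph {..<?k} WB" using WBsub unfolding simple_graph_pairs VB_def by auto
    show "\<not> contains ({..<?k}, WB) ({..<?k}, HE 2 ?k)"
    proof
      assume "contains ({..<?k}, WB) ({..<?k}, HE 2 ?k)"
      then obtain T S where "valid VB WB 2 ?k T S" using contains_iff[OF fVB k2] unfolding VB_def by auto
      then obtain a where "a \<in> VB" "?k - 1 \<le> card (nb VB WB a)"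
        using book_nb_big[OF fVB WBsub] by blast
      then show False using nb_WB m by fastforce
    qed
    show "card WB = 2 * (m * m) - 2 * m"
      unfolding WB_def using card_compl[OF fVB MB2] cVB choose2_even[of m] mat_card[of 0 m] arith3[of m]
      by simp
  qed
  have mm: "2 * m \<le> m * m" using mult_le_mono1[OF m, of m] by simp
  have cardG: "card GB = 2 * (m * m) - 2 * m + 1"
  proof -
    have "card GB = m * (2 * m - 1) - (m - 1)"
      unfolding GB_def using card_compl[OF fVB MB1] cVB choose2_even[of m] mat_card[of 2 "m - 1"] by simp
    moreover have "m * (2 * m - 1) + m = 2 * (m * m)" by (rule arith3)
    ultimately show ?thesis using m mm by linarith
  qed
  have key: "valid VB GB 2 ?k T S \<longleftrightarrow> T = {0, 1} \<and> S = VB - {0, 1}" for T S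
  proof
    assume v: "valid VB GB 2 ?k T S"
    obtain a b where ab: "a \<in> VB" "b \<in> VB" "a \<noteq> b" "T = {a, b}" "{a, b} \<in> GB"
      "S \<subseteq> nb VB GB a" "S \<subseteq> nb VB GB b" "card S = ?k - 2"
      "?k - 1 \<le> card (nb VB GB a)" "?k - 1 \<le> card (nb VB GB b)"
      using book_nb_big[OF fVB GBsub v] by blast
    have "a < 2" using ab(1,9) nb_GB[of a] m by fastforce
    moreover have "b < 2" using ab(2,10) nb_GB[of b] m by fastforce
    ultimately have T: "T = {0, 1}" using ab(3,4) by auto
    have "S \<subseteq> VB - {0, 1}" using ab(6,7) nb_sub[OF GBsub, of a] nb_sub[OF GBsub, of b] T ab(4) ab(3)
      by (auto simp: doubleton_eq_iff)
    moreover have "card (VB - {0, 1}) = card S" using ab(8) cVB m unfolding VB_def by (simp add: card_Diff_subset)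
    ultimately have "S = VB - {0, 1}" using fVB by (simp add: card_subset_eq)
    then show "T = {0, 1} \<and> S = VB - {0, 1}" using T by simp
  next
    assume ts: "T = {0, 1} \<and> S = VB - {0, 1}"
    have 0: "(0::nat) \<in> VB" "(1::nat) \<in> VB" unfolding VB_def using m by auto
    have "1 \<in> nb VB GB 0" using nb_GB01[of 0] 0 by simp
    then have "{1, 0} \<in> GB" unfolding nb_def by simp
    then have g01: "{0, 1} \<in> GB" by (simp add: insert_commute)
    have s0: "VB - {0, 1} \<subseteq> nb VB GB 0" using nb_GB01[of 0] by auto
    have s1: "VB - {0, 1} \<subseteq> nb VB GB 1" using nb_GB01[of 1] by auto
    have c: "card (VB - {0, 1}) = ?k - 2" using cVB m unfolding VB_def by (simp add: card_Diff_subset)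
    have h: "0 \<in> VB \<and> 1 \<in> VB \<and> (0::nat) \<noteq> 1 \<and> T = {0, 1} \<and> {0, 1} \<in> GB \<and>
      S \<subseteq> nb VB GB 0 \<and> S \<subseteq> nb VB GB 1 \<and> card S = ?k - 2"
      using ts 0 g01 s0 s1 c by simp
    show "valid VB GB 2 ?k T S" unfolding book_valid[OF GBsub]
      by (intro exI[of _ 0] exI[of _ 1]) (fact h)
  qed
  have "card (copies (VB, GB) ({..<?k}, HE 2 ?k)) = 1"
    by (rule card_copies_one[OF fVB, of 2 ?k GB "{0, 1}" "VB - {0, 1}"]) (use k2 key in auto)
  moreover have "simple_graph {..<?k} GB" using GBsub unfolding simple_graph_pairs VB_def by auto
  moreover have "card GB = ex ?k ({..<?k}, HE 2 ?k) + 1"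
  proof -
    have "2 * m \<le> m * m" using mult_le_mono1[OF m, of m] by simp
    then show ?thesis using ex cardG by linarith
  qed
  ultimately show ?thesis unfolding VB_def by blast
qed


definition "VC = {..<2 * m + 1}"
definition "M3 = Mat 3 (m - 1)"
definition "Tri = {{0, 1}, {1, 2}, {0, 2::nat}}"
definition "Pth = {{0, 1}, {1, 2::nat}}"
definition "GC = pairs VC - (Pth \<union> M3)"
definition "WC = pairs VC - (Tri \<union> M3)"

lemma fVC: "finite VC" unfolding VC_def by simp
lemma cVC: "card VC = 2 * m + 1" unfolding VC_def by simp
lemma M3sub: "M3 \<subseteq> pairs VC" unfolding VC_def M3_def by (rule mat_sub) (use m in auto)
lemma Trisub: "Tri \<union> M3 \<subseteq> pairs VC" using M3sub m unfolding Tri_def VC_def by (auto simp: in_pairs)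
lemma Pthsub: "Pth \<union> M3 \<subseteq> pairs VC" using M3sub m unfolding Pth_def VC_def by (auto simp: in_pairs)
lemma GCsub: "GC \<subseteq> pairs VC" unfolding GC_def by auto
lemma WCsub: "WC \<subseteq> pairs VC" unfolding WC_def by auto
lemma M3ge: "{u, v} \<in> M3 \<Longrightarrow> 3 \<le> v" unfolding M3_def using mat_elem[of "{u, v}" 3 "m - 1" v] by auto
lemma M3el: "e \<in> M3 \<Longrightarrow> x \<in> e \<Longrightarrow> 3 \<le> x" unfolding M3_def using mat_elem by blast
lemma TriM3: "Tri \<inter> M3 = {}"
proof -
  have "{0, 1} \<notin> M3" using M3el[of "{0, 1}" 0] by auto
  moreover have "{1, 2} \<notin> M3" using M3el[of "{1, 2}" 1] by auto
  moreover have "{0, 2} \<notin> M3" using M3el[of "{0, 2}" 0] by auto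
  ultimately show ?thesis unfolding Tri_def by auto
qed
lemma PthM3: "Pth \<inter> M3 = {}" using TriM3 unfolding Pth_def Tri_def by auto
lemma cTri: "card Tri = 3" unfolding Tri_def by (simp add: doubleton_eq_iff)
lemma cPth: "card Pth = 2" unfolding Pth_def by (simp add: doubleton_eq_iff)
lemma cM3: "card M3 = m - 1" unfolding M3_def by (rule mat_card)
lemma partner3: "v \<in> VC \<Longrightarrow> 3 \<le> v \<Longrightarrow> \<exists>p. {p, v} \<in> M3"
proof -
  assume v: "v \<in> VC" "3 \<le> v"
  have "v < 3 + 2 * (m - 1)" using v m unfolding VC_def by auto
  then show ?thesis using mat_partner[of 3 v "m - 1"] v unfolding M3_def by auto
qed

lemma nnC: "X \<subseteq> pairs VC \<Longrightarrow> v \<in> VC \<Longrightarrow> u \<in> VC \<Longrightarrow> {u, v} \<in> X \<Longrightarrow> u \<in> nn VC (pairs VC - X) v"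
  using nn_compl_M[of X VC v] by simp

lemma in01: "(0::nat) \<in> VC" "(1::nat) \<in> VC" "(2::nat) \<in> VC" unfolding VC_def using m by auto

lemma book_common:
  assumes X: "X \<subseteq> pairs VC" and v: "valid VC (pairs VC - X) 2 (2 * m) T S"
  shows "\<exists>a b R. a \<in> VC \<and> b \<in> VC \<and> a \<noteq> b \<and> T = {a, b} \<and> card R = 1 \<and>
     nn VC (pairs VC - X) a \<subseteq> R \<and> nn VC (pairs VC - X) b \<subseteq> R \<and> R = (VC - {a, b}) - S \<and>
     S \<subseteq> VC - {a, b}"
proof -
  have E: "pairs VC - X \<subseteq> pairs VC" by auto
  obtain a b where ab: "a \<in> VC" "b \<in> VC" "a \<noteq> b" "T = {a, b}" "{a, b} \<in> pairs VC - X"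
    "S \<subseteq> nb VC (pairs VC - X) a" "S \<subseteq> nb VC (pairs VC - X) b" "card S = 2 * m - 2"
    using v unfolding book_valid[OF E] by blast
  have R: "card ((VC - {a, b}) - S) = 1" using card_R[OF fVC E ab(1-3) ab(6-7)] cVC ab(8) m by simp
  have "S \<subseteq> VC - {a, b}" using ab(6,7) nb_sub[OF E, of a] nb_sub[OF E, of b] by auto
  moreover note book_R[OF E ab(3) ab(5) ab(6-7)]
  ultimately show ?thesis using ab R
    by (intro exI[of _ a] exI[of _ b] exI[of _ "(VC - {a, b}) - S"]) simp
qed

lemma book2:
  "\<exists>E. simple_graph {..<2 * m + 1} E \<and>
     card E = ex (2 * m + 1) ({..<2 * m}, HE 2 (2 * m)) + 1 \<and>
     card (copies ({..<2 * m + 1}, E) ({..<2 * m}, HE 2 (2 * m))) = 1"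
proof -
  let ?k = "2 * m"
  let ?n = "2 * m + 1"
  have k2: "2 \<le> ?k" "?k \<le> 2 * m" using m by auto
  have cp: "card (pairs VC) = (2 * m + 1) * m" using card_pairs[OF fVC] cVC choose2_odd by simp
  have ex: "ex ?n ({..<?k}, HE 2 ?k) = 2 * (m * m) - 2"
  proof (rule ex_eqI)
    fix E assume sg: "simple_graph {..<?n} E" and nc: "\<not> contains ({..<?n}, E) ({..<?k}, HE 2 ?k)"
    have E: "E \<subseteq> pairs VC" using sg unfolding simple_graph_pairs VC_def by auto
    have "\<not> 2 * card (pairs VC - E) \<le> ?k + 2"
      using book_bound_k1[OF fVC E _ _ _] nc cVC m unfolding VC_def by auto
    moreover have "card (pairs VC - E) = card (pairs VC) - card E"
      using E finite_pairs[OF fVC] by (simp add: card_Diff_subset finite_subset)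
    moreover have "card E \<le> card (pairs VC)" using E finite_pairs[OF fVC] by (simp add: card_mono)
    ultimately show "card E \<le> 2 * (m * m) - 2" using cp by (simp add: algebra_simps)
  next
    show "simple_graph {..<?n} WC" using WCsub unfolding simple_graph_pairs VC_def by auto
    show "card WC = 2 * (m * m) - 2"
    proof -
      have "card (Tri \<union> M3) = card Tri + card M3"
        using TriM3 finite_subset[OF M3sub finite_pairs[OF fVC]] by (intro card_Un_disjoint) (auto simp: Tri_def)
      then have "card (Tri \<union> M3) = m + 2" using cTri cM3 m by simp
      then show ?thesis unfolding WC_def using card_compl[OF fVC Trisub] cVC choose2_odd[of m]
        by (simp add: algebra_simps)
    qed
    show "\<not> contains ({..<?n}, WC) ({..<?k}, HE 2 ?k)"
    proof
      assume "contains ({..<?n}, WC) ({..<?k}, HE 2 ?k)"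
      then obtain T S where "valid VC WC 2 ?k T S" using contains_iff[OF fVC, of 2 ?k] m unfolding VC_def by auto
      then obtain a b R where abR: "a \<in> VC" "b \<in> VC" "a \<noteq> b" "card R = 1"
        "nn VC WC a \<subseteq> R" "nn VC WC b \<subseteq> R"
        using book_common[OF Trisub] unfolding WC_def by blast
      have small: "3 \<le> x" if x: "x \<in> VC" "nn VC WC x \<subseteq> R" for x
      proof (rule ccontr)
        assume "\<not> 3 \<le> x"
        then have "x = 0 \<or> x = 1 \<or> x = 2" by auto
        then obtain y z where "y \<in> VC" "z \<in> VC" "y \<noteq> z" "{y, x} \<in> Tri" "{z, x} \<in> Tri"
          using in01 unfolding Tri_def by (auto simp: insert_commute)
        then have "y \<in> nn VC WC x" "z \<in> nn VC WC x" using nnC[OF Trisub x(1)] unfolding WC_def by auto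
        then show False using card_one_two[OF abR(4)] \<open>y \<noteq> z\<close> x(2) by blast
      qed
      obtain pa where pa: "{pa, a} \<in> M3" using partner3 abR small by blast
      obtain pb where pb: "{pb, b} \<in> M3" using partner3 abR small by blast
      have "pa \<in> VC" "pb \<in> VC" using pa pb M3sub by (auto simp: in_pairs)
      then have "pa \<in> R" "pb \<in> R" using pa pb nnC[OF Trisub] abR unfolding WC_def by blast+
      then have "pa = pb" using card_one_eq[OF abR(4)] by blast
      then have "{a, pa} \<in> M3" "{b, pa} \<in> M3" using pa pb by (auto simp: insert_commute)
      then have "a = b" unfolding M3_def by (rule mat_unique)
      then show False using abR by simp
    qed
  qed
  have cardG: "card GC = 2 * (m * m) - 1"
  proof -
    have "card (Pth \<union> M3) = card Pth + card M3"
      using PthM3 finite_subset[OF M3sub finite_pairs[OF fVC]] by (intro card_Un_disjoint) (auto simp: Pth_def)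
    then have "card (Pth \<union> M3) = m + 1" using cPth cM3 m by simp
    then show ?thesis unfolding GC_def using card_compl[OF fVC Pthsub] cVC choose2_odd[of m]
      by (simp add: algebra_simps)
  qed
  have key: "valid VC GC 2 ?k T S \<longleftrightarrow> T = {0, 2} \<and> S = VC - {0, 1, 2}" for T S
  proof
    assume v: "valid VC GC 2 ?k T S"
    then obtain a b R where abR: "a \<in> VC" "b \<in> VC" "a \<noteq> b" "T = {a, b}" "card R = 1"
        "nn VC GC a \<subseteq> R" "nn VC GC b \<subseteq> R" "R = (VC - {a, b}) - S" "S \<subseteq> VC - {a, b}"
        using book_common[OF Pthsub] unfolding GC_def by blast
    have n1: "0 \<in> nn VC GC 1" "2 \<in> nn VC GC 1" "1 \<in> nn VC GC 0" "1 \<in> nn VC GC 2"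
      using nnC[OF Pthsub] in01 unfolding GC_def Pth_def by (auto simp: insert_commute)
    have nM: "p \<in> nn VC GC x" if "{p, x} \<in> M3" for p x
    proof -
      have "p \<in> VC" "x \<in> VC" using that M3sub by (auto simp: in_pairs)
      then show ?thesis using nnC[OF Pthsub] that unfolding GC_def by blast
    qed
    have side: "x = 0 \<or> x = 2" if x: "x \<in> VC" "y \<in> VC" "x \<noteq> y" "nn VC GC x \<subseteq> R" "nn VC GC y \<subseteq> R" for x y
    proof -
      have not1: "z \<noteq> 1" if "nn VC GC z \<subseteq> R" for z
        using that n1 card_one_two[OF abR(5), of 0 2] by auto
      have "x \<noteq> 1" using not1 x(4) .
      moreover have "\<not> 3 \<le> x"
      proof
        assume "3 \<le> x"
        then obtain px where px: "{px, x} \<in> M3" using partner3 x(1) by blast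
        have pxR: "px \<in> R" using nM[OF px] x(4) by blast
        have px3: "3 \<le> px" using M3ge[of x px] px by (simp add: insert_commute)
        show False
        proof (cases "3 \<le> y")
          case True
          then obtain py where py: "{py, y} \<in> M3" using partner3 x(2) by blast
          have "py \<in> R" using nM[OF py] x(5) by blast
          then have "py = px" using pxR card_one_eq[OF abR(5)] by blast
          then have "{x, px} \<in> M3" "{y, px} \<in> M3" using px py by (auto simp: insert_commute)
          then have "x = y" unfolding M3_def by (rule mat_unique)
          then show False using x(3) by simp
        next
          case False
          then have "y = 0 \<or> y = 2" using not1[OF x(5)] by auto
          then have "1 \<in> R" using n1 x(5) by auto
          then have "px = 1" using pxR card_one_eq[OF abR(5)] by blast
          then show False using px3 by simp
        qed
      qed
      ultimately show ?thesis by auto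
    qed
    have a02: "a = 0 \<or> a = 2" using side[OF abR(1,2,3,6,7)] .
    have b02: "b = 0 \<or> b = 2" using side[OF abR(2,1) abR(3)[symmetric] abR(7,6)] .
    have T: "T = {0, 2}" using a02 b02 abR(3,4) by auto
    have "1 \<in> R" using a02 n1 abR(6) by auto
    then have R1: "R = {1}" using abR(5) card_one_eq[OF abR(5)] by (auto simp: card_1_singleton_iff)
    have ab02: "{a, b} = {0, 2}" using T abR(4) by simp
    have "S = (VC - {a, b}) - R" using abR(8,9) by auto
    then have "S = VC - {0, 1, 2}" using ab02 R1 by auto
    then show "T = {0, 2} \<and> S = VC - {0, 1, 2}" using T by simp
  next
    assume ts: "T = {0, 2} \<and> S = VC - {0, 1, 2}"
    have nbx: "VC - {0, 1, 2} \<subseteq> nb VC GC x" if "x = 0 \<or> x = 2" for x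
    proof
      fix u assume u: "u \<in> VC - {0, 1, 2}"
      then have "3 \<le> u" by auto
      then have "{u, x} \<notin> M3" using M3el[of "{u, x}" x] that by auto
      moreover have "{u, x} \<notin> Pth" using u that unfolding Pth_def by (auto simp: doubleton_eq_iff)
      ultimately show "u \<in> nb VC GC x" using u that in01 unfolding GC_def nb_def by (auto simp: in_pairs)
    qed
    have "{0, 2} \<in> GC"
    proof -
      have "{0, 2::nat} \<notin> M3" using M3ge[of 2 0] by (auto simp: insert_commute)
      moreover have "{0, 2::nat} \<notin> Pth" unfolding Pth_def by (auto simp: doubleton_eq_iff)
      ultimately show ?thesis using in01 unfolding GC_def by (auto simp: in_pairs)
    qed
    moreover have "card (VC - {0, 1, 2}) = ?k - 2" using cVC in01 fVC by (simp add: card_Diff_subset)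
    ultimately have h: "0 \<in> VC \<and> 2 \<in> VC \<and> (0::nat) \<noteq> 2 \<and> T = {0, 2} \<and> {0, 2} \<in> GC \<and>
      S \<subseteq> nb VC GC 0 \<and> S \<subseteq> nb VC GC 2 \<and> card S = ?k - 2"
      using ts in01 nbx[of 0] nbx[of 2] by simp
    show "valid VC GC 2 ?k T S" unfolding book_valid[OF GCsub]
      by (intro exI[of _ 0] exI[of _ 2]) (fact h)
  qed
  have "card (copies (VC, GC) ({..<?k}, HE 2 ?k)) = 1"
    by (rule card_copies_one[OF fVC, of 2 ?k GC "{0, 2}" "VC - {0, 1, 2}"]) (use k2 key in auto)
  moreover have "simple_graph {..<?n} GC" using GCsub unfolding simple_graph_pairs VC_def by auto
  moreover have "card GC = ex ?n ({..<?k}, HE 2 ?k) + 1"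
  proof -
    have "2 * m \<le> m * m" using mult_le_mono1[OF m, of m] by simp
    then show ?thesis using ex cardG m by linarith
  qed
  ultimately show ?thesis unfolding VC_def by blast
qed

end


theorem corollary3:
  fixes k :: nat
  assumes "k \<ge> 4"
  shows "\<exists>HE :: nat set set. simple_graph {..<k} HE \<and>
           (\<exists>n1 n2 :: nat. n1 \<noteq> n2 \<and> 0 < n1 \<and> 0 < n2 \<and>
              (\<forall>n \<in> {n1, n2}. \<exists>E :: nat set set. simple_graph {..<n} E \<and>
                  card E = ex n ({..<k}, HE) + 1 \<and>
                  card (copies ({..<n}, E) ({..<k}, HE)) = 1))"
proof (cases "even k")
  case True
  then obtain m where k: "k = 2 * m" by (rule evenE)
  with assms have m: "2 \<le> m" by simp
  have A: "\<forall>n \<in> {k, k + 1}. \<exists>E :: nat set set. simple_graph {..<n} E \<and>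
                  card E = ex n ({..<k}, HE 2 k) + 1 \<and>
                  card (copies ({..<n}, E) ({..<k}, HE 2 k)) = 1"
    using book1[OF m] book2[OF m] k by auto
  show ?thesis
    by (rule exI[of _ "HE 2 k"], rule conjI[OF HE_simple], rule exI[of _ k], rule exI[of _ "k + 1"])
       (use A assms in auto)
next
  case False
  then obtain m where k: "k = 2 * m + 1" by (rule oddE)
  with assms have m: "2 \<le> m" by simp
  have A: "\<forall>n \<in> {k, 4 * m + 1}. \<exists>E :: nat set set. simple_graph {..<n} E \<and>
                  card E = ex n ({..<k}, HE 1 k) + 1 \<and>
                  card (copies ({..<n}, E) ({..<k}, HE 1 k)) = 1"
    using star1[OF m] star2[OF m] k by auto
  have ne: "k \<noteq> 4 * m + 1" using k m by simp
  show ?thesis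
    by (rule exI[of _ "HE 1 k"], rule conjI[OF HE_simple], rule exI[of _ k], rule exI[of _ "4 * m + 1"])
       (use A assms ne in auto)
qed

end
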